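(* There is no binary linear $[n,k,d]$ code $C$ with $\mathbf{1}_n\in C$ such that, for some positive integer $t$, $$d^\perp-t=\#\{u \mid C_u\neq\emptyset,\ 0<u\le n-t\}=3,$$ the nonzero weights of $C$ are exactly $d,\ n/2,\ n-d,\ n$ (with $n$ even), and $d^\perp>8$.
   Context: $\mathbf{1}_n$ is the all-ones vector; $C^\perp$ is the dual code with respect to the standard inner product and $d^\perp$ its minimum nonzero weight; $C_u=\{c\in C:\mathrm{wt}(c)=u\}$ (Hamming weight). The paper notes that in the case $d^\perp-t=3$ the weight distribution of $C$ is supported on $0,d,n/2,n-d,n$ with $n$ even, and works under this assumption throughout. *)

theory Defs
  imports Main
begin

text \<open>Binary vectors of length n are bool lists (True = 1, False = 0);
  addition is componentwise xor.\<close>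

definition bvec :: "nat \<Rightarrow> bool list set" where
  "bvec n = {v. length v = n}"

definition vadd :: "bool list \<Rightarrow> bool list \<Rightarrow> bool list" where
  "vadd u v = map2 (\<noteq>) u v"

definition wt :: "bool list \<Rightarrow> nat" where
  "wt v = length (filter id v)"

definition orth :: "bool list \<Rightarrow> bool list \<Rightarrow> bool" where
  "orth u v \<longleftrightarrow> even (length (filter id (map2 (\<and>) u v)))"

definition binary_linear_code :: "nat \<Rightarrow> bool list set \<Rightarrow> bool" where
  "binary_linear_code n C \<longleftrightarrow> C \<subseteq> bvec n \<and> replicate n False \<in> C \<and>
     (\<forall>u\<in>C. \<forall>v\<in>C. vadd u v \<in> C)"

definition dual_code :: "nat \<Rightarrow> bool list set \<Rightarrow> bool list set" where
  "dual_code n C = {v \<in> bvec n. \<forall>c\<in>C. orth c v}"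

definition is_min_weight :: "bool list set \<Rightarrow> nat \<Rightarrow> bool" where
  "is_min_weight D m \<longleftrightarrow> (\<exists>c\<in>D. 0 < wt c \<and> wt c = m) \<and> (\<forall>c\<in>D. 0 < wt c \<longrightarrow> m \<le> wt c)"

definition is_nkd_code :: "nat \<Rightarrow> nat \<Rightarrow> nat \<Rightarrow> bool list set \<Rightarrow> bool" where
  "is_nkd_code n k d C \<longleftrightarrow> binary_linear_code n C \<and> card C = 2 ^ k \<and> is_min_weight C d"

definition nz_weights :: "bool list set \<Rightarrow> nat set" where
  "nz_weights C = {u. 0 < u \<and> (\<exists>c\<in>C. wt c = u)}"

end

theory Submission imports Defs begin

definition sg :: "bool \<Rightarrow> int" where "sg b = (if b then -1 else 1)"
definition xv :: "bool list \<Rightarrow> int" where "xv c = sum_list (map sg c)"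
definition unitv :: "nat \<Rightarrow> nat \<Rightarrow> bool list" where "unitv n i = map (\<lambda>k. k = i) [0..<n]"
fun par :: "nat \<Rightarrow> nat list \<Rightarrow> bool list" where
  "par n [] = replicate n False"
| "par n (i#js) = vadd (unitv n i) (par n js)"
definition Ls :: "nat \<Rightarrow> nat \<Rightarrow> nat list set" where
  "Ls n j = {js. set js \<subseteq> {..<n} \<and> length js = j}"

lemma orth_Cons: "orth (a#c) (b#v) = (orth c v \<noteq> (a \<and> b))"
  by (auto simp: orth_def)
lemma orth_Nil: "orth [] []" by (simp add: orth_def)
lemma vadd_Cons: "vadd (a#u) (b#v) = (a \<noteq> b) # vadd u v" by (simp add: vadd_def)
lemma vadd_Nil: "vadd [] [] = []" by (simp add: vadd_def)
lemma length_vadd[simp]: "length (vadd u v) = min (length u) (length v)" by (simp add: vadd_def)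

lemma orth_vadd2: "length u = length c \<Longrightarrow> length v = length c \<Longrightarrow>
   orth c (vadd u v) = (orth c u = orth c v)"
proof (induction c arbitrary: u v)
  case Nil then show ?case by (simp add: vadd_Nil orth_Nil)
next
  case (Cons a c)
  then obtain x u' y v' where "u = x#u'" "v = y#v'" by (metis length_Suc_conv)
  with Cons show ?case by (auto simp: vadd_Cons orth_Cons)
qed

lemma orth_vadd1: "length u = length v \<Longrightarrow> length w = length v \<Longrightarrow>
   orth (vadd u w) v = (orth u v = orth w v)"
proof (induction v arbitrary: u w)
  case Nil then show ?case by (simp add: vadd_Nil orth_Nil)
next
  case (Cons a c)
  then obtain x u' y v' where "u = x#u'" "w = y#v'" by (metis length_Suc_conv)
  with Cons show ?case by (auto simp: vadd_Cons orth_Cons)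
qed

lemma vadd_vadd: "length u = length v \<Longrightarrow> vadd u (vadd u v) = v"
proof (induction u arbitrary: v)
  case Nil then show ?case by (simp add: vadd_def)
next
  case (Cons a u)
  then obtain y v' where "v = y#v'" by (metis length_Suc_conv)
  with Cons show ?case by (auto simp: vadd_Cons)
qed

lemma orth_card: "length c = length v \<Longrightarrow>
   orth c v = even (card {k. k < length c \<and> c!k \<and> v!k})"
proof -
  assume a: "length c = length v"
  have "{i. i < length (map2 (\<and>) c v) \<and> id (map2 (\<and>) c v ! i)} = {k. k < length c \<and> c!k \<and> v!k}"
    using a by auto
  then show ?thesis by (simp only: orth_def length_filter_conv_card)
qed

lemma wt_card: "wt v = card {k. k < length v \<and> v!k}"
  by (simp add: wt_def length_filter_conv_card)

lemma length_unitv[simp]: "length (unitv n i) = n" by (simp add: unitv_def)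
lemma length_par[simp]: "length (par n js) = n" by (induction "js") auto

lemma orth_unit: "length c = n \<Longrightarrow> i < n \<Longrightarrow> orth c (unitv n i) = (\<not> c!i)"
proof -
  assume a: "length c = n" "i < n"
  have "{k. k < length c \<and> c!k \<and> unitv n i!k} = (if c!i then {i} else {})"
    using a by (auto simp: unitv_def)
  then show ?thesis using a by (simp add: orth_card)
qed

lemma orth_unit1: "length v = n \<Longrightarrow> i < n \<Longrightarrow> orth (unitv n i) v = (\<not> v!i)"
proof -
  assume a: "length v = n" "i < n"
  have "{k. k < length (unitv n i) \<and> unitv n i!k \<and> v!k} = (if v!i then {i} else {})"
    using a by (auto simp: unitv_def)
  then show ?thesis using a by (simp add: orth_card)
qed

lemma orth_zero: "orth c (replicate n False)"
proof -
  have "filter id (map2 (\<and>) c (replicate n False)) = []"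
    by (auto simp: filter_empty_conv in_set_zip)
  then show ?thesis by (simp add: orth_def)
qed

lemma wt_le_length: "wt v \<le> length v" by (simp add: wt_def)

lemma wt_zero: "wt v = 0 \<longleftrightarrow> v = replicate (length v) False"
  apply (auto simp: wt_def filter_empty_conv intro: replicate_eqI)
  by (metis in_set_replicate)

lemma wt_vadd: "wt (vadd u v) \<le> wt u + wt v"
proof -
  have "{k. k < length (vadd u v) \<and> vadd u v!k} \<subseteq> {k. k < length u \<and> u!k} \<union> {k. k < length v \<and> v!k}"
    by (auto simp: vadd_def)
  then have "card {k. k < length (vadd u v) \<and> vadd u v!k} \<le> card ({k. k < length u \<and> u!k} \<union> {k. k < length v \<and> v!k})"
    by (intro card_mono) auto
  also have "\<dots> \<le> card {k. k < length u \<and> u!k} + card {k. k < length v \<and> v!k}" by (rule card_Un_le)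
  finally show ?thesis by (simp add: wt_card)
qed

lemma wt_unitv: "i < n \<Longrightarrow> wt (unitv n i) = 1"
proof -
  assume "i < n"
  then have "{k. k < length (unitv n i) \<and> unitv n i!k} = {i}" by (auto simp: unitv_def)
  then show ?thesis by (simp add: wt_card)
qed

lemma wt_par: "set js \<subseteq> {..<n} \<Longrightarrow> wt (par n js) \<le> length js"
proof (induction "js")
  case Nil then show ?case by (simp add: wt_def)
next
  case (Cons i js)
  then show ?case using wt_vadd[of "unitv n i" "par n js"] wt_unitv[of i n] by auto
qed

lemma chi_par: "length c = n \<Longrightarrow> set js \<subseteq> {..<n} \<Longrightarrow>
  prod_list (map (\<lambda>i. sg (c!i)) js) = (if orth c (par n js) then 1 else -1)"
proof (induction "js")
  case Nil then show ?case by (simp add: orth_zero)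
next
  case (Cons i js)
  then have "orth c (par n (i#js)) = ((\<not> c!i) = orth c (par n js))"
    by (simp add: orth_vadd2 orth_unit)
  with Cons show ?case by (auto simp: sg_def)
qed

lemma xv_alt: "xv c = int (length c) - 2 * int (wt c)"
  by (induction c) (auto simp: xv_def wt_def sg_def)

lemma xv_sum: "xv c = (\<Sum>i<length c. sg (c!i))"
  by (simp add: xv_def sum_list_sum_nth atLeast0LessThan)

lemma Ls_Suc: "Ls n (Suc j) = (\<lambda>(i,js). i#js) ` ({..<n} \<times> Ls n j)"
proof
  show "Ls n (Suc j) \<subseteq> (\<lambda>(i,js). i#js) ` ({..<n} \<times> Ls n j)"
  proof
    fix xs assume "xs \<in> Ls n (Suc j)"
    then obtain i js where "xs = i#js" "i < n" "js \<in> Ls n j"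
      by (auto simp: Ls_def length_Suc_conv)
    then show "xs \<in> (\<lambda>(i,js). i#js) ` ({..<n} \<times> Ls n j)" by force
  qed
qed (auto simp: Ls_def)

lemma finite_Ls: "finite (Ls n j)"
  unfolding Ls_def by (rule finite_lists_length_eq) simp

lemma power_expand: "length c = n \<Longrightarrow>
  xv c ^ j = (\<Sum>js\<in>Ls n j. prod_list (map (\<lambda>i. sg (c!i)) js))"
proof (induction j)
  case 0
  have "Ls n 0 = {[]}" by (auto simp: Ls_def)
  then show ?case by simp
next
  case (Suc j)
  have "xv c ^ Suc j = (\<Sum>i<n. sg (c!i)) * (\<Sum>js\<in>Ls n j. prod_list (map (\<lambda>i. sg (c!i)) js))"
    using Suc by (simp add: xv_sum)
  also have "\<dots> = (\<Sum>p\<in>{..<n} \<times> Ls n j. prod_list (map (\<lambda>i. sg (c!i)) (fst p # snd p)))"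
    by (simp add: sum_product sum.cartesian_product case_prod_beta)
  also have "\<dots> = (\<Sum>js\<in>Ls n (Suc j). prod_list (map (\<lambda>i. sg (c!i)) js))"
    unfolding Ls_Suc by (subst sum.reindex) (auto simp: inj_on_def case_prod_beta)
  finally show ?case .
qed


lemma finite_bvec: "finite (bvec n)"
proof -
  show ?thesis using finite_lists_length_eq[of "UNIV::bool set" n] by (simp add: bvec_def)
qed

lemma card_bvec: "card (bvec n) = 2 ^ n"
proof -
  show ?thesis using card_lists_length_eq[of "UNIV::bool set" n] by (simp add: bvec_def)
qed

lemma char_sum:
  assumes C: "binary_linear_code n C" and v: "v \<in> bvec n"
  shows "(\<Sum>c\<in>C. (if orth c v then 1 else -1 :: int)) = (if \<forall>c\<in>C. orth c v then int (card C) else 0)"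
proof (cases "\<forall>c\<in>C. orth c v")
  case True then show ?thesis by simp
next
  case False
  then obtain c0 where c0: "c0 \<in> C" "\<not> orth c0 v" by blast
  have sub: "C \<subseteq> bvec n" and cl: "\<forall>u\<in>C. \<forall>w\<in>C. vadd u w \<in> C"
    using C by (auto simp: binary_linear_code_def)
  let ?f = "\<lambda>c. (if orth c v then 1 else -1 :: int)"
  have len: "\<And>c. c \<in> C \<Longrightarrow> length c = n" using sub by (auto simp: bvec_def)
  have "(\<Sum>c\<in>C. ?f (vadd c0 c)) = (\<Sum>c\<in>C. ?f c)"
    by (rule sum.reindex_bij_witness[where i="vadd c0" and j="vadd c0"])
       (use c0 cl len in \<open>auto simp: vadd_vadd\<close>)
  moreover have "\<And>c. c \<in> C \<Longrightarrow> ?f (vadd c0 c) = - ?f c"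
    using c0 len v by (auto simp: orth_vadd1 bvec_def)
  ultimately have "(\<Sum>c\<in>C. - ?f c) = (\<Sum>c\<in>C. ?f c)" by simp
  then have "(\<Sum>c\<in>C. ?f c) = 0" by (simp add: sum_negf)
  then show ?thesis using False by auto
qed

lemma moment:
  assumes C: "binary_linear_code n C"
    and H: "\<And>v. v \<in> bvec n \<Longrightarrow> 0 < wt v \<Longrightarrow> wt v \<le> j \<Longrightarrow> \<not> (\<forall>c\<in>C. orth c v)"
  shows "(\<Sum>c\<in>C. xv c ^ j) = int (card C) * int (card {js\<in>Ls n j. par n js = replicate n False})"
proof -
  have sub: "C \<subseteq> bvec n" using C by (auto simp: binary_linear_code_def)
  have len: "\<And>c. c \<in> C \<Longrightarrow> length c = n" using sub by (auto simp: bvec_def)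
  have "(\<Sum>c\<in>C. xv c ^ j) = (\<Sum>c\<in>C. \<Sum>js\<in>Ls n j. (if orth c (par n js) then 1 else -1 :: int))"
    by (rule sum.cong) (auto simp: power_expand len chi_par Ls_def intro!: sum.cong)
  also have "\<dots> = (\<Sum>js\<in>Ls n j. \<Sum>c\<in>C. (if orth c (par n js) then 1 else -1 :: int))"
    by (rule sum.swap)
  also have "\<dots> = (\<Sum>js\<in>Ls n j. if par n js = replicate n False then int (card C) else 0)"
  proof (rule sum.cong)
    fix js assume js: "js \<in> Ls n j"
    have pb: "par n js \<in> bvec n" by (simp add: bvec_def)
    have "(\<forall>c\<in>C. orth c (par n js)) = (par n js = replicate n False)"
    proof
      assume a: "\<forall>c\<in>C. orth c (par n js)"
      show "par n js = replicate n False"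
      proof (rule ccontr)
        assume "par n js \<noteq> replicate n False"
        then have "0 < wt (par n js)" using wt_zero[of "par n js"] by simp
        moreover have "wt (par n js) \<le> j" using wt_par[of js n] js by (simp add: Ls_def)
        ultimately show False using H[OF pb] a by blast
      qed
    qed (simp add: orth_zero)
    then show "(\<Sum>c\<in>C. (if orth c (par n js) then 1 else -1 :: int)) = (if par n js = replicate n False then int (card C) else 0)"
      using char_sum[OF C pb] by simp
  qed simp
  also have "\<dots> = (\<Sum>js\<in>{js\<in>Ls n j. par n js = replicate n False}. int (card C))"
    by (rule sum.inter_filter[OF finite_Ls, symmetric])
  finally show ?thesis by simp
qed

lemma full_code: "binary_linear_code n (bvec n)"
  by (auto simp: binary_linear_code_def bvec_def)

lemma full_H: "v \<in> bvec n \<Longrightarrow> 0 < wt v \<Longrightarrow> \<not> (\<forall>c\<in>bvec n. orth c v)"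
proof -
  assume v: "v \<in> bvec n" "0 < wt v"
  then obtain k where k: "k < n" "v!k"
    by (auto simp: wt_def bvec_def filter_empty_conv in_set_conv_nth)
  have "unitv n k \<in> bvec n" by (simp add: bvec_def)
  moreover have "\<not> orth (unitv n k) v" using orth_unit1[of v n k] v k by (simp add: bvec_def)
  ultimately show ?thesis by blast
qed

lemma moment_eq:
  assumes C: "binary_linear_code n C"
    and H: "\<And>v. v \<in> bvec n \<Longrightarrow> 0 < wt v \<Longrightarrow> wt v \<le> j \<Longrightarrow> \<not> (\<forall>c\<in>C. orth c v)"
  shows "2 ^ n * (\<Sum>c\<in>C. xv c ^ j) = int (card C) * (\<Sum>v\<in>bvec n. xv v ^ j)"
  using moment[OF C H] moment[OF full_code full_H, of n j] card_bvec[of n] by simp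

definition S :: "nat \<Rightarrow> nat \<Rightarrow> int" where "S j n = (\<Sum>v\<in>bvec n. xv v ^ j)"

lemma S_Suc: "S j (Suc n) = (\<Sum>v\<in>bvec n. (xv v - 1) ^ j + (xv v + 1) ^ j)"
proof -
  have b: "bvec (Suc n) = Cons True ` bvec n \<union> Cons False ` bvec n"
    by (auto simp: bvec_def length_Suc_conv)
  have "S j (Suc n) = (\<Sum>v\<in>Cons True ` bvec n. xv v ^ j) + (\<Sum>v\<in>Cons False ` bvec n. xv v ^ j)"
    unfolding S_def b by (rule sum.union_disjoint) (auto simp: finite_bvec)
  also have "\<dots> = (\<Sum>v\<in>bvec n. (xv v - 1) ^ j) + (\<Sum>v\<in>bvec n. (xv v + 1) ^ j)"
    by (simp add: sum.reindex xv_def sg_def add.commute)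
  finally show ?thesis by (simp add: sum.distrib)
qed

lemma S0: "S 0 n = 2 ^ n" by (simp add: S_def card_bvec)

lemma S2: "S 2 n = 2 ^ n * int n"
proof (induction n)
  case 0 then show ?case by (simp add: S_def bvec_def xv_def)
next
  case (Suc n)
  have e: "\<And>x::int. (x - 1)^2 + (x + 1)^2 = 2 * x^2 + 2" by algebra
  have "S 2 (Suc n) = 2 * S 2 n + 2 * S 0 n"
    unfolding S_Suc e by (simp add: S_def sum.distrib sum_distrib_left)
  then show ?case using Suc S0 by (simp add: algebra_simps)
qed

lemma S4: "S 4 n = 2 ^ n * (3 * int n ^ 2 - 2 * int n)"
proof (induction n)
  case 0 then show ?case by (simp add: S_def bvec_def xv_def)
next
  case (Suc n)
  have e: "\<And>x::int. (x - 1)^4 + (x + 1)^4 = 2 * x^4 + 12 * x^2 + 2" by algebra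
  have "S 4 (Suc n) = 2 * S 4 n + 12 * S 2 n + 2 * S 0 n"
    unfolding S_Suc e by (simp add: S_def sum.distrib sum_distrib_left)
  then show ?case using Suc S0 S2 by (simp add: algebra_simps power2_eq_square)
qed

lemma S6: "S 6 n = 2 ^ n * (15 * int n ^ 3 - 30 * int n ^ 2 + 16 * int n)"
proof (induction n)
  case 0 then show ?case by (simp add: S_def bvec_def xv_def)
next
  case (Suc n)
  have e: "\<And>x::int. (x - 1)^6 + (x + 1)^6 = 2 * x^6 + 30 * x^4 + 30 * x^2 + 2" by algebra
  have "S 6 (Suc n) = 2 * S 6 n + 30 * S 4 n + 30 * S 2 n + 2 * S 0 n"
    unfolding S_Suc e by (simp add: S_def sum.distrib sum_distrib_left)
  then show ?case using Suc S0 S2 S4 by (simp add: algebra_simps power2_eq_square power3_eq_cube)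
qed

lemma S8: "S 8 n = 2 ^ n * (105 * int n ^ 4 - 420 * int n ^ 3 + 588 * int n ^ 2 - 272 * int n)"
proof (induction n)
  case 0 then show ?case by (simp add: S_def bvec_def xv_def)
next
  case (Suc n)
  have e: "\<And>x::int. (x - 1)^8 + (x + 1)^8 = 2 * x^8 + 56 * x^6 + 140 * x^4 + 56 * x^2 + 2" by algebra
  have "S 8 (Suc n) = 2 * S 8 n + 56 * S 6 n + 140 * S 4 n + 56 * S 2 n + 2 * S 0 n"
    unfolding S_Suc e by (simp add: S_def sum.distrib sum_distrib_left)
  then show ?case using Suc S0 S2 S4 S6 by (simp add: algebra_simps power2_eq_square power3_eq_cube power4_eq_xxxx)
qed


lemma cancel2: "(2::int)^n * a = N * (2^n * c) \<Longrightarrow> a = N * c"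
  by (simp add: mult.left_commute)

theorem theorem4p2:
  fixes n k d dperp t :: nat and C :: "bool list set"
  assumes "is_nkd_code n k d C"
    and "replicate n True \<in> C"
    and "is_min_weight (dual_code n C) dperp"
    and "0 < t"
    and "int dperp - int t = 3"
    and "card {u. (\<exists>c\<in>C. wt c = u) \<and> 0 < u \<and> u \<le> n - t} = 3"
    and "even n"
    and "nz_weights C = {d, n div 2, n - d, n}"
    and "dperp > 8"
  shows False
proof -
  have C: "binary_linear_code n C" using assms(1) by (simp add: is_nkd_code_def)
  have sub: "C \<subseteq> bvec n" and z: "replicate n False \<in> C" using C by (auto simp: binary_linear_code_def)
  have finC: "finite C" using sub finite_bvec finite_subset by blast
  have Npos: "card C > 0" using finC z card_gt_0_iff by blast
  define N where "N = int (card C)"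
  have Npos': "N > 0" using Npos N_def by simp
  obtain v0 where v0: "v0 \<in> dual_code n C" "wt v0 = dperp"
    using assms(3) by (auto simp: is_min_weight_def)
  have "dperp \<le> n" using v0 wt_le_length[of v0] by (auto simp: dual_code_def bvec_def)
  then have n9: "n \<ge> 9" using assms(9) by simp
  have H: "\<And>v. v \<in> bvec n \<Longrightarrow> 0 < wt v \<Longrightarrow> wt v \<le> j \<Longrightarrow> \<not> (\<forall>c\<in>C. orth c v)" if "j \<le> 8" for j
  proof
    fix v assume v: "v \<in> bvec n" "0 < wt v" "wt v \<le> j" "\<forall>c\<in>C. orth c v"
    then have "v \<in> dual_code n C" by (simp add: dual_code_def)
    then have "dperp \<le> wt v" using v assms(3) by (auto simp: is_min_weight_def)
    then show False using v that assms(9) by simp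
  qed
  have mom: "2 ^ n * (\<Sum>c\<in>C. xv c ^ j) = N * S j n" if "j \<le> 8" for j
    using moment_eq[OF C H[OF that]] unfolding S_def N_def .
  define m where "m = int n"
  have m2: "(\<Sum>c\<in>C. xv c ^ 2) = N * m" using cancel2[OF mom[of 2, unfolded S2]] by (simp add: m_def)
  have m4: "(\<Sum>c\<in>C. xv c ^ 4) = N * (3 * m ^ 2 - 2 * m)" using cancel2[OF mom[of 4, unfolded S4]] by (simp add: m_def)
  have m6: "(\<Sum>c\<in>C. xv c ^ 6) = N * (15 * m ^ 3 - 30 * m ^ 2 + 16 * m)" using cancel2[OF mom[of 6, unfolded S6]] by (simp add: m_def)
  have m8: "(\<Sum>c\<in>C. xv c ^ 8) = N * (105 * m ^ 4 - 420 * m ^ 3 + 588 * m ^ 2 - 272 * m)"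
    using cancel2[OF mom[of 8, unfolded S8]] by (simp add: m_def)
  have "n - d \<in> nz_weights C" using assms(8) by simp
  then have dn: "d < n" unfolding nz_weights_def by simp
  define b where "b = (m - 2 * int d) ^ 2"
  have sq: "xv c ^ 2 = m ^ 2 \<or> xv c ^ 2 = b \<or> xv c ^ 2 = 0" if c: "c \<in> C" for c
  proof -
    have len: "length c = n" using c sub by (auto simp: bvec_def)
    have "wt c = 0 \<or> wt c \<in> nz_weights C" using c unfolding nz_weights_def by auto
    then have "wt c = 0 \<or> wt c = d \<or> wt c = n div 2 \<or> wt c = n - d \<or> wt c = n" unfolding assms(8) by simp
    moreover have "2 * int (n div 2) = m" using assms(7) m_def by auto
    moreover have "int (n - d) = m - int d" using dn m_def by simp
    moreover have xe: "xv c = m - 2 * int (wt c)" using len xv_alt m_def by simp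
    ultimately consider "xv c = m" | "xv c = m - 2 * int d" | "xv c = 0" | "xv c = m - 2 * (m - int d)" | "xv c = m - 2 * m"
      by (elim disjE) (simp_all add: m_def)
    then show ?thesis
    proof cases
      case 4
      have "(m - 2 * (m - int d))^2 = b" unfolding b_def by algebra
      then show ?thesis using 4 by simp
    next
      case 5
      have "(m - 2 * m)^2 = m^2" by algebra
      then show ?thesis using 5 by simp
    qed (simp_all add: b_def)
  qed
  have P0: "xv c ^ 2 * (xv c ^ 2 - b) * (xv c ^ 2 - m ^ 2) = 0" if "c \<in> C" for c
    using sq[OF that] by (elim disjE) simp_all
  have e1: "(\<Sum>c\<in>C. xv c ^ 6) - (b + m^2) * (\<Sum>c\<in>C. xv c ^ 4) + b * m^2 * (\<Sum>c\<in>C. xv c ^ 2) = 0"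
  proof -
    have "(\<Sum>c\<in>C. xv c ^ 6) - (b + m^2) * (\<Sum>c\<in>C. xv c ^ 4) + b * m^2 * (\<Sum>c\<in>C. xv c ^ 2)
       = (\<Sum>c\<in>C. xv c ^ 6 - (b + m^2) * xv c ^ 4 + b * m^2 * xv c ^ 2)"
      by (simp only: sum.distrib sum_subtractf sum_distrib_left)
    also have "\<dots> = (\<Sum>c\<in>C. xv c ^ 2 * (xv c ^ 2 - b) * (xv c ^ 2 - m ^ 2))"
      by (intro sum.cong refl) algebra
    also have "\<dots> = 0" by (intro sum.neutral ballI P0)
    finally show ?thesis .
  qed
  have e2: "(\<Sum>c\<in>C. xv c ^ 8) - (b + m^2) * (\<Sum>c\<in>C. xv c ^ 6) + b * m^2 * (\<Sum>c\<in>C. xv c ^ 4) = 0"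
  proof -
    have "(\<Sum>c\<in>C. xv c ^ 8) - (b + m^2) * (\<Sum>c\<in>C. xv c ^ 6) + b * m^2 * (\<Sum>c\<in>C. xv c ^ 4)
       = (\<Sum>c\<in>C. xv c ^ 8 - (b + m^2) * xv c ^ 6 + b * m^2 * xv c ^ 4)"
      by (simp only: sum.distrib sum_subtractf sum_distrib_left)
    also have "\<dots> = (\<Sum>c\<in>C. xv c ^ 2 * (xv c ^ 2 * (xv c ^ 2 - b) * (xv c ^ 2 - m ^ 2)))"
      by (intro sum.cong refl) algebra
    also have "\<dots> = 0" by (intro sum.neutral ballI) (simp only: P0 mult_zero_right)
    finally show ?thesis .
  qed
  have E1: "N * (m * (m - 1) * (m - 2) * (b - 3 * m + 8)) = 0"
  proof -
    have "N * (m * (m - 1) * (m - 2) * (b - 3 * m + 8)) =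
      (\<Sum>c\<in>C. xv c ^ 6) - (b + m^2) * (\<Sum>c\<in>C. xv c ^ 4) + b * m^2 * (\<Sum>c\<in>C. xv c ^ 2)"
      unfolding m2 m4 m6 by algebra
    then show ?thesis using e1 by simp
  qed
  have m9: "m \<ge> 9" using n9 m_def by simp
  have "m * (m - 1) * (m - 2) \<noteq> 0" using m9 by simp
  then have bv: "b = 3 * m - 8" using E1 Npos' by simp
  have E2: "N * (- 6 * (m * (m - 1) * (m - 2) * (m - 3) * (m - 4))) = 0"
  proof -
    have "N * (- 6 * (m * (m - 1) * (m - 2) * (m - 3) * (m - 4))) =
      (\<Sum>c\<in>C. xv c ^ 8) - (b + m^2) * (\<Sum>c\<in>C. xv c ^ 6) + b * m^2 * (\<Sum>c\<in>C. xv c ^ 4)"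
      unfolding m8 m4 m6 bv by algebra
    then show ?thesis using e2 by simp
  qed
  have "m * (m - 1) * (m - 2) * (m - 3) * (m - 4) \<noteq> 0" using m9 by simp
  then show False using E2 Npos' by simp
qed

end
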